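(* Let $S=\{a_i \bmod d_i : 1\le i\le r\}$ be an exact covering system with $r\ge 2$, and let $G_S$ be its exact covering system digraph. Then every (weakly connected) component of $G_S$ contains exactly one directed cycle.
   Context: A system of congruences $S=\{a_i \bmod d_i : 1\le i\le r\}$ with integers $a_i$ and nonzero integers $d_i$ (negative $d_i$ allowed; $n\equiv a \bmod -d$ means $n\equiv a\bmod d$) is an exact covering system if every integer satisfies exactly one of the congruences; congruences are distinguished by their chosen representatives $a_i$. The exact covering system digraph $G_S$ has vertex set $\mathbb{Z}$ and edges $(n,d_in+a_i)$ for all $n\in\mathbb{Z}$, $1\le i\le r$ (loops count as cycles of length one); $r$ is its degree. A component means a connected component of the underlying undirected graph. *)

theory Defs
  imports Main "HOL-Number_Theory.Cong"
begin

text \<open>A system of congruences is a list of pairs (a_i, d_i); index i < length S.\<close>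

definition exact_covering_system :: "(int \<times> int) list \<Rightarrow> bool" where
  "exact_covering_system S \<longleftrightarrow>
     (\<forall>i<length S. snd (S ! i) \<noteq> 0) \<and>
     (\<forall>n::int. \<exists>!i. i < length S \<and> [n = fst (S ! i)] (mod snd (S ! i)))"

text \<open>Edges of the digraph G_S are labelled by (source n, index i); the edge goes to d_i n + a_i.\<close>

definition ecs_target :: "(int \<times> int) list \<Rightarrow> int \<Rightarrow> nat \<Rightarrow> int" where
  "ecs_target S n i = snd (S ! i) * n + fst (S ! i)"

definition ecs_edges :: "(int \<times> int) list \<Rightarrow> (int \<times> nat) set" where
  "ecs_edges S = {(n, i). i < length S}"

text \<open>A directed cycle (loops included) is given by its set of edges: a nonempty closed walk
  whose source vertices are pairwise distinct.\<close>

definition ecs_cycle :: "(int \<times> int) list \<Rightarrow> (int \<times> nat) set \<Rightarrow> bool" where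
  "ecs_cycle S C \<longleftrightarrow>
     (\<exists>es. es \<noteq> [] \<and> set es = C \<and> set es \<subseteq> ecs_edges S \<and> distinct (map fst es) \<and>
        (\<forall>j<length es. ecs_target S (fst (es ! j)) (snd (es ! j))
                          = fst (es ! ((j + 1) mod length es))))"

definition ecs_adj :: "(int \<times> int) list \<Rightarrow> int \<Rightarrow> int \<Rightarrow> bool" where
  "ecs_adj S x y \<longleftrightarrow> (\<exists>i<length S. y = ecs_target S x i \<or> x = ecs_target S y i)"

definition ecs_component :: "(int \<times> int) list \<Rightarrow> int set \<Rightarrow> bool" where
  "ecs_component S K \<longleftrightarrow> (\<exists>x. K = {y. (ecs_adj S)\<^sup>*\<^sup>* x y})"

end

theory Submission
  imports Defs
begin

locale ecsl =
  fixes S :: "(int \<times> int) list"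
  assumes ecs: "exact_covering_system S" and len: "2 \<le> length S"
begin

definition idx :: "int \<Rightarrow> nat" where
  "idx m = (THE i. i < length S \<and> [m = fst (S!i)] (mod snd (S!i)))"

definition pp :: "int \<Rightarrow> int" where
  "pp m = (m - fst (S ! idx m)) div snd (S ! idx m)"

definition inedge :: "int \<Rightarrow> int \<times> nat" where
  "inedge v = (pp v, idx v)"

lemma dnz: "i < length S \<Longrightarrow> snd (S!i) \<noteq> 0"
  using ecs unfolding exact_covering_system_def by auto

lemma idx: "idx m < length S \<and> [m = fst (S!(idx m))] (mod snd (S!(idx m)))"
proof -
  have "\<exists>!i. i < length S \<and> [m = fst (S!i)] (mod snd (S!i))"
    using ecs unfolding exact_covering_system_def by auto
  then show ?thesis unfolding idx_def by (rule theI')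
qed

lemma idx_unique: "i < length S \<Longrightarrow> [m = fst (S!i)] (mod snd (S!i)) \<Longrightarrow> idx m = i"
proof -
  assume a: "i < length S" "[m = fst (S!i)] (mod snd (S!i))"
  have "\<exists>!i. i < length S \<and> [m = fst (S!i)] (mod snd (S!i))"
    using ecs unfolding exact_covering_system_def by auto
  then show ?thesis unfolding idx_def using a by (auto intro: the1_equality)
qed

lemma target_pp: "ecs_target S (pp m) (idx m) = m"
proof -
  have "snd (S!(idx m)) dvd (m - fst (S!(idx m)))"
    using idx[of m] by (simp add: cong_iff_dvd_diff)
  then show ?thesis unfolding ecs_target_def pp_def by auto
qed

lemma target_eq:
  assumes "i < length S" "ecs_target S n i = m"
  shows "i = idx m \<and> n = pp m"
proof -
  have m: "m = snd (S!i) * n + fst (S!i)" using assms unfolding ecs_target_def by auto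
  have "[m = fst (S!i)] (mod snd (S!i))" unfolding m by (simp add: cong_iff_dvd_diff)
  then have i: "idx m = i" using idx_unique assms(1) by auto
  have "pp m = (m - fst (S!i)) div snd (S!i)" unfolding pp_def i ..
  also have "\<dots> = n" unfolding m using dnz[OF assms(1)] by simp
  finally have "pp m = n" .
  then show ?thesis using i by auto
qed

lemma d_abs: assumes "i < length S" shows "2 \<le> \<bar>snd (S!i)\<bar>"
proof (rule ccontr)
  assume "\<not> 2 \<le> \<bar>snd (S!i)\<bar>"
  then have u: "\<bar>snd (S!i)\<bar> = 1" using dnz[OF assms] by linarith
  define j where "j = (if i = 0 then 1 else (0::nat))"
  have j: "j < length S" "j \<noteq> i" using len unfolding j_def by auto
  have c1: "[fst (S!j) = fst (S!j)] (mod snd (S!j))" by simp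
  have c2: "[fst (S!j) = fst (S!i)] (mod snd (S!i))"
  proof -
    have "snd (S!i) dvd (fst (S!j) - fst (S!i))" using u by (metis abs_dvd_iff one_dvd)
    then show ?thesis by (simp only: cong_iff_dvd_diff)
  qed
  have "idx (fst (S!j)) = j" using idx_unique[OF j(1) c1] .
  moreover have "idx (fst (S!j)) = i" using idx_unique[OF assms c2] .
  ultimately show False using j by auto
qed

definition AA :: int where "AA = Max ((\<lambda>i. \<bar>fst (S!i)\<bar>) ` {..<length S})"

lemma a_le: "i < length S \<Longrightarrow> \<bar>fst (S!i)\<bar> \<le> AA"
  unfolding AA_def by (rule Max_ge) auto

lemma pp_bound: "2 * \<bar>pp m\<bar> \<le> \<bar>m\<bar> + AA"
proof -
  let ?i = "idx m"
  have i: "?i < length S" using idx by auto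
  have "m = snd (S!?i) * pp m + fst (S!?i)" using target_pp[of m] unfolding ecs_target_def by simp
  then have "m - fst (S!?i) = snd (S!?i) * pp m" by linarith
  then have "\<bar>snd (S!?i)\<bar> * \<bar>pp m\<bar> = \<bar>m - fst (S!?i)\<bar>" by (simp add: abs_mult)
  also have "\<dots> \<le> \<bar>m\<bar> + AA" using a_le[OF i] by linarith
  finally have "\<bar>snd (S!?i)\<bar> * \<bar>pp m\<bar> \<le> \<bar>m\<bar> + AA" .
  moreover have "2 * \<bar>pp m\<bar> \<le> \<bar>snd (S!?i)\<bar> * \<bar>pp m\<bar>"
    using d_abs[OF i] by (simp add: mult_right_mono)
  ultimately show ?thesis by linarith
qed

lemma iter_bound:
  assumes "\<bar>x\<bar> \<le> B" "AA \<le> B"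
  shows "\<bar>(pp ^^ k) x\<bar> \<le> B"
proof (induction k)
  case 0 then show ?case using assms by simp
next
  case (Suc k)
  have "2 * \<bar>pp ((pp ^^ k) x)\<bar> \<le> \<bar>(pp ^^ k) x\<bar> + AA" by (rule pp_bound)
  then have "\<bar>pp ((pp ^^ k) x)\<bar> \<le> B" using Suc assms by linarith
  then show ?case by simp
qed

lemma adj_pp: "ecs_adj S y (pp y)"
  unfolding ecs_adj_def using target_pp[of y] idx[of y] by metis

lemma adj_meet:
  assumes "(ecs_adj S)\<^sup>*\<^sup>* x y"
  shows "\<exists>k l. (pp ^^ k) x = (pp ^^ l) y"
  using assms
proof (induction rule: rtranclp_induct)
  case base
  then show ?case by (metis funpow_0)
next
  case (step y z)
  then obtain k l where kl: "(pp ^^ k) x = (pp ^^ l) y" by blast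
  obtain i where i: "i < length S" "z = ecs_target S y i \<or> y = ecs_target S z i"
    using step(2) unfolding ecs_adj_def by blast
  show ?case
  proof (cases "z = ecs_target S y i")
    case True
    then have "y = pp z" using target_eq[OF i(1)] by metis
    then have "(pp ^^ l) y = (pp ^^ Suc l) z" by (simp only: funpow_Suc_right o_apply)
    then show ?thesis using kl by metis
  next
    case False
    then have "y = ecs_target S z i" using i by auto
    then have "z = pp y" using target_eq[OF i(1)] by metis
    then have z: "z = pp y" .
    have "(pp ^^ Suc k) x = pp ((pp ^^ k) x)" by simp
    also have "\<dots> = pp ((pp ^^ l) y)" using kl by simp
    also have "\<dots> = (pp ^^ l) (pp y)" by (simp add: funpow_swap1)
    finally have "(pp ^^ Suc k) x = (pp ^^ l) z" using z by simp
    then show ?thesis by metis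
  qed
qed

lemma iter_in_comp:
  "(ecs_adj S)\<^sup>*\<^sup>* x ((pp ^^ k) x)"
proof (induction k)
  case 0 then show ?case by simp
next
  case (Suc k) then show ?case using adj_pp by (simp add: rtranclp.rtrancl_into_rtrancl)
qed

lemma mod_helper: "t < (L::nat) \<Longrightarrow> Suc ((t + L - 1) mod L) mod L = t"
proof (cases t)
  case 0
  assume "t < L"
  then have "(t + L - 1) mod L = L - 1" using 0 by simp
  then show ?thesis using 0 \<open>t < L\<close> by simp
next
  case (Suc s)
  assume "t < L"
  have e: "t + L - 1 = s + L" using Suc by simp
  have "(t + L - 1) mod L = s" unfolding e using Suc \<open>t < L\<close> by simp
  then show ?thesis using Suc \<open>t < L\<close> by simp
qed

lemma cycle_struct:
  assumes "ecs_cycle S C"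
  shows "C = inedge ` (fst ` C) \<and> fst ` C \<noteq> {} \<and> (\<forall>v\<in>fst ` C. pp v \<in> fst ` C)
     \<and> (\<forall>v\<in>fst ` C. \<forall>w\<in>fst ` C. \<exists>k. w = (pp ^^ k) v)"
proof -
  obtain es where es: "es \<noteq> []" "set es = C" "set es \<subseteq> ecs_edges S"
    "\<forall>j<length es. ecs_target S (fst (es ! j)) (snd (es ! j)) = fst (es ! ((j + 1) mod length es))"
    using assms unfolding ecs_cycle_def by blast
  define L where "L = length es"
  define s where "s j = fst (es ! j)" for j
  have L: "0 < L" using es(1) L_def by auto
  have key: "es ! j = inedge (s (Suc j mod L)) \<and> pp (s (Suc j mod L)) = s j" if j: "j < L" for j
  proof -
    have "es ! j \<in> ecs_edges S" using es(3) j L_def by auto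
    then have lt: "snd (es!j) < length S" unfolding ecs_edges_def by auto
    have "ecs_target S (s j) (snd (es ! j)) = s (Suc j mod L)"
      using es(4) j unfolding s_def L_def by auto
    from target_eq[OF lt this] show ?thesis unfolding inedge_def s_def
      by (metis prod.collapse)
  qed
  have Cset: "C = (\<lambda>j. es ! j) ` {..<L}"
    unfolding es(2)[symmetric] L_def by (auto simp: set_conv_nth)
  have V: "fst ` C = s ` {..<L}"
    unfolding Cset s_def by (simp add: image_image)
  have pp_s: "pp (s t) = s ((t + L - 1) mod L)" if "t < L" for t
    using key[of "(t + L - 1) mod L"] mod_helper[OF that] L by simp
  have ie_s: "inedge (s t) = es ! ((t + L - 1) mod L)" if "t < L" for t
    using key[of "(t + L - 1) mod L"] mod_helper[OF that] L by simp
  have c1: "C = inedge ` (fst ` C)"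
  proof
    show "C \<subseteq> inedge ` fst ` C"
    proof
      fix e assume "e \<in> C"
      then obtain j where j: "j < L" "e = es ! j" unfolding Cset by auto
      have "s (Suc j mod L) \<in> fst ` C" unfolding V using L by auto
      then show "e \<in> inedge ` fst ` C" using key[OF j(1)] j(2) by auto
    qed
    show "inedge ` fst ` C \<subseteq> C"
    proof
      fix e assume "e \<in> inedge ` fst ` C"
      then obtain t where t: "t < L" "e = inedge (s t)" unfolding V by auto
      then show "e \<in> C" unfolding Cset using ie_s[OF t(1)] L by auto
    qed
  qed
  have c2: "\<forall>v\<in>fst ` C. pp v \<in> fst ` C"
    unfolding V using pp_s L by auto
  have bk: "s t = (pp ^^ k) (s ((t + k) mod L))" if "t < L" for t k
  proof (induction k)
    case 0 then show ?case using that by simp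
  next
    case (Suc k)
    have "pp (s (Suc ((t + k) mod L) mod L)) = s ((t + k) mod L)"
      using key[of "(t + k) mod L"] L by simp
    then have "pp (s ((t + Suc k) mod L)) = s ((t + k) mod L)"
      by (simp add: mod_Suc_eq)
    then show ?case using Suc by (simp add: funpow_Suc_right del: funpow.simps)
  qed
  have c3: "\<forall>v\<in>fst ` C. \<forall>w\<in>fst ` C. \<exists>k. w = (pp ^^ k) v"
  proof (intro ballI)
    fix v w assume "v \<in> fst ` C" "w \<in> fst ` C"
    then obtain t u where tu: "t < L" "u < L" "v = s t" "w = s u" unfolding V by auto
    have "(u + (t + L - u)) mod L = t" using tu by simp
    then show "\<exists>k. w = (pp ^^ k) v" using bk[OF tu(2), of "t + L - u"] tu by metis
  qed
  have ne: "fst ` C \<noteq> {}" unfolding V using L by auto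
  show ?thesis using c1 c2 c3 ne by blast
qed

lemma closed_iter: "(\<forall>v\<in>V. pp v \<in> V) \<Longrightarrow> v \<in> V \<Longrightarrow> (pp ^^ k) v \<in> V"
  by (induction k) auto


lemma fp: "(f ^^ a) ((f ^^ b) y) = (f ^^ (a+b)) y"
  by (simp add: funpow_add)

lemma exists_cycle:
  "\<exists>C. ecs_cycle S C \<and> fst ` C \<subseteq> {y. (ecs_adj S)\<^sup>*\<^sup>* x y}"
proof -
  define B where "B = max \<bar>x\<bar> AA"
  define f where "f k = (pp ^^ k) x" for k
  have fb: "f k \<in> {-B..B}" for k
    using iter_bound[of x B k] unfolding f_def B_def by auto
  have ninj: "\<not> inj_on f {..<nat (2*B+2)}"
  proof
    assume "inj_on f {..<nat (2*B+2)}"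
    then have "card {..<nat (2*B+2)} \<le> card {-B..B}"
      by (rule card_inj_on_le) (use fb in auto)
    moreover have "0 \<le> B" unfolding B_def by auto
    ultimately show False by simp
  qed
  then obtain k l where kl: "k < l" "f k = f l"
  proof -
    obtain a b where ab: "f a = f b" "a \<noteq> b" using ninj unfolding inj_on_def by blast
    show ?thesis
    proof (cases "a < b")
      case True then show ?thesis using that ab by blast
    next
      case False then have "b < a" using ab by simp
      then show ?thesis using that ab by (metis)
    qed
  qed
  define u where "u = f k"
  have per: "(pp ^^ (l - k)) u = u"
  proof -
    have "(pp ^^ (l - k)) u = (pp ^^ (l - k + k)) x" unfolding u_def f_def by (rule fp)
    also have "l - k + k = l" using kl by simp
    finally show ?thesis using kl unfolding u_def f_def by simp
  qed
  define P where "P n = (0 < n \<and> (pp ^^ n) u = u)" for n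
  have Pex: "P (l - k)" using per kl unfolding P_def by auto
  define m where "m = (LEAST n. P n)"
  have Pm: "P m" unfolding m_def using Pex by (rule LeastI)
  have mmin: "\<And>n. 0 < n \<Longrightarrow> n < m \<Longrightarrow> (pp ^^ n) u \<noteq> u"
    using not_less_Least unfolding m_def P_def by blast
  have m0: "0 < m" and um: "(pp ^^ m) u = u" using Pm unfolding P_def by auto
  define es where "es = map (\<lambda>j. inedge ((pp ^^ (m - j - 1)) u)) [0..<m]"
  have len_es: "length es = m" unfolding es_def by simp
  have es_nth: "es ! j = inedge ((pp ^^ (m - j - 1)) u)" if "j < m" for j
    unfolding es_def using that by simp
  have fst_es: "fst (es ! j) = (pp ^^ (m - j)) u" if "j < m" for j
  proof -
    have "m - j = Suc (m - j - 1)" using that by simp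
    then show ?thesis using es_nth[OF that] unfolding inedge_def
      by (metis fst_conv funpow.simps(2) o_apply)
  qed
  have cyc: "ecs_cycle S (set es)"
    unfolding ecs_cycle_def
  proof (intro exI conjI)
    show "es \<noteq> []" using m0 len_es by auto
    show "set es = set es" ..
    show "set es \<subseteq> ecs_edges S"
      unfolding es_def ecs_edges_def inedge_def using idx by auto
    show "distinct (map fst es)"
    proof -
      have "map fst es = map (\<lambda>j. (pp ^^ (m - j)) u) [0..<m]"
        by (rule nth_equalityI) (auto simp: len_es fst_es)
      moreover have "inj_on (\<lambda>j. (pp ^^ (m - j)) u) {0..<m}"
      proof (rule inj_onI, rule ccontr)
        fix a b assume ab: "a \<in> {0..<m}" "b \<in> {0..<m}"
          "(pp ^^ (m - a)) u = (pp ^^ (m - b)) u" "a \<noteq> b"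
        have gen: "False" if "a' < b'" "b' < m" "(pp ^^ (m - a')) u = (pp ^^ (m - b')) u" for a' b'
        proof -
          have "(pp ^^ (b' - a')) u = (pp ^^ (b' - a')) ((pp ^^ m) u)" using um by simp
          also have "\<dots> = (pp ^^ (b' - a' + m)) u" by (rule fp)
          also have "b' - a' + m = b' + (m - a')" using that by simp
          also have "(pp ^^ (b' + (m - a'))) u = (pp ^^ b') ((pp ^^ (m - a')) u)" by (rule fp[symmetric])
          also have "\<dots> = (pp ^^ b') ((pp ^^ (m - b')) u)" using that by simp
          also have "\<dots> = (pp ^^ (b' + (m - b'))) u" by (rule fp)
          also have "b' + (m - b') = m" using that by simp
          finally have "(pp ^^ (b' - a')) u = u" using um by simp
          then show False using mmin[of "b' - a'"] that by auto
        qed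
        show False
        proof (cases "a < b")
          case True then show False using gen[of a b] ab by auto
        next
          case False then show False using gen[of b a] ab by auto
        qed
      qed
      ultimately show ?thesis by (simp add: distinct_map)
    qed
    show "\<forall>j<length es. ecs_target S (fst (es ! j)) (snd (es ! j)) = fst (es ! ((j + 1) mod length es))"
    proof (intro allI impI)
      fix j assume j: "j < length es"
      have t: "ecs_target S (fst (es ! j)) (snd (es ! j)) = (pp ^^ (m - j - 1)) u"
        using es_nth[of j] j len_es target_pp unfolding inedge_def by auto
      show "ecs_target S (fst (es ! j)) (snd (es ! j)) = fst (es ! ((j + 1) mod length es))"
      proof (cases "j + 1 < m")
        case True then show ?thesis using t fst_es[of "j+1"] len_es by simp
      next
        case False
        then have "j + 1 = m" using j len_es by simp
        then show ?thesis using t fst_es[of 0] len_es m0 um by simp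
      qed
    qed
  qed
  have "fst ` set es \<subseteq> {y. (ecs_adj S)\<^sup>*\<^sup>* x y}"
  proof
    fix v assume "v \<in> fst ` set es"
    then obtain j where j: "j < m" "v = fst (es ! j)" using len_es by (auto simp: in_set_conv_nth)
    then have "v = (pp ^^ (m - j + k)) x" using fst_es[OF j(1)] unfolding u_def f_def
      by (simp add: fp)
    then show "v \<in> {y. (ecs_adj S)\<^sup>*\<^sup>* x y}" using iter_in_comp by auto
  qed
  then show ?thesis using cyc by blast
qed

lemma unique_cycle:
  assumes "ecs_cycle S C1" "ecs_cycle S C2"
    "fst ` C1 \<subseteq> {y. (ecs_adj S)\<^sup>*\<^sup>* x y}" "fst ` C2 \<subseteq> {y. (ecs_adj S)\<^sup>*\<^sup>* x y}"
  shows "C1 = C2"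
proof -
  note s1 = cycle_struct[OF assms(1)] and s2 = cycle_struct[OF assms(2)]
  obtain v1 where v1: "v1 \<in> fst ` C1" using s1 by auto
  obtain v2 where v2: "v2 \<in> fst ` C2" using s2 by auto
  obtain k1 l1 where 1: "(pp ^^ k1) x = (pp ^^ l1) v1" using adj_meet v1 assms(3) by blast
  obtain k2 l2 where 2: "(pp ^^ k2) x = (pp ^^ l2) v2" using adj_meet v2 assms(4) by blast
  define w where "w = (pp ^^ (k1 + k2)) x"
  have "w = (pp ^^ (k2 + k1)) x" unfolding w_def by (simp add: add.commute)
  also have "\<dots> = (pp ^^ k2) ((pp ^^ k1) x)" by (rule fp[symmetric])
  also have "\<dots> = (pp ^^ k2) ((pp ^^ l1) v1)" using 1 by simp
  also have "\<dots> = (pp ^^ (k2 + l1)) v1" by (rule fp)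
  finally have w1: "w = (pp ^^ (k2 + l1)) v1" .
  have "w = (pp ^^ k1) ((pp ^^ k2) x)" unfolding w_def by (rule fp[symmetric])
  also have "\<dots> = (pp ^^ k1) ((pp ^^ l2) v2)" using 2 by simp
  also have "\<dots> = (pp ^^ (k1 + l2)) v2" by (rule fp)
  finally have w2: "w = (pp ^^ (k1 + l2)) v2" .
  have wC1: "w \<in> fst ` C1" unfolding w1 using closed_iter s1 v1 by blast
  have wC2: "w \<in> fst ` C2" unfolding w2 using closed_iter s2 v2 by blast
  have "fst ` C1 \<subseteq> fst ` C2"
  proof
    fix z assume "z \<in> fst ` C1"
    then obtain k where "z = (pp ^^ k) w" using s1 wC1 by blast
    then show "z \<in> fst ` C2" using closed_iter s2 wC2 by blast
  qed
  moreover have "fst ` C2 \<subseteq> fst ` C1"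
  proof
    fix z assume "z \<in> fst ` C2"
    then obtain k where "z = (pp ^^ k) w" using s2 wC2 by blast
    then show "z \<in> fst ` C1" using closed_iter s1 wC1 by blast
  qed
  ultimately have "fst ` C1 = fst ` C2" by blast
  moreover have "C1 = inedge ` fst ` C1" using s1 by blast
  moreover have "C2 = inedge ` fst ` C2" using s2 by blast
  ultimately show ?thesis by simp
qed

end

theorem mainTheorem5:
  fixes S :: "(int \<times> int) list" and K :: "int set"
  assumes "exact_covering_system S"
    and "length S \<ge> 2"
    and "ecs_component S K"
  shows "\<exists>!C. ecs_cycle S C \<and> fst ` C \<subseteq> K"
proof -
  interpret ecsl S using assms(1,2) by unfold_locales
  obtain x where K: "K = {y. (ecs_adj S)\<^sup>*\<^sup>* x y}" using assms(3) unfolding ecs_component_def by blast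
  obtain C where C: "ecs_cycle S C" "fst ` C \<subseteq> K" using exists_cycle[of x] unfolding K by blast
  show ?thesis
  proof (rule ex1I[of _ C])
    show "ecs_cycle S C \<and> fst ` C \<subseteq> K" using C by blast
    fix C' assume "ecs_cycle S C' \<and> fst ` C' \<subseteq> K"
    then show "C' = C" using unique_cycle[of C' C x] C unfolding K by blast
  qed
qed

end
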